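(* Suppose that $A\neq B$ are strictly tree coloring equivalent $m\times m$ coloring matrices. Then there is a finite sequence $A=C_0,C_1,\dots,C_r=B$ with $r\ge1$ such that each $C_{s}$ is obtained from $C_{s-1}$ by one application of the following operation: given a coloring matrix $C=(c_{pq})$, disjoint sets $I,J\subseteq\{1,\dots,m\}$ with $|I|=|J|$ such that $\sum_{i\in I}t_C^{(i)}(n)=\sum_{j\in J}t_C^{(j)}(n)$ for all $n$, and a color $\ell$ with $c_{\ell i}=0$ for all $i\in I$ and $c_{\ell j}=1$ for all $j\in J$, replace $C$ by the matrix $C'$ that agrees with $C$ except that $c'_{\ell i}=1$ for $i\in I$ and $c'_{\ell j}=0$ for $j\in J$.
   Context: A plane tree is an unlabeled rooted tree in which the children of every vertex are linearly ordered. A coloring matrix is an $m\times m$ matrix $A=(a_{ij})$ with entries in $\{0,1\}$. An $A$-coloring of a plane tree assigns to each vertex a color in $\{1,\dots,m\}$ such that whenever a vertex of color $j$ is a child of a vertex of color $i$, $a_{ij}=1$. Let $t_A^{(i)}(n)$ be the number of pairs (plane tree with $n$ vertices, $A$-coloring of it) in which the root has color $i$. Two $m\times m$ coloring matrices $A,B$ are strictly tree coloring equivalent if $t_A^{(i)}(n)=t_B^{(i)}(n)$ for all $n\ge1$ and all $1\le i\le m$. *)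

theory Defs
  imports Main
begin

text \<open>A plane tree together with a coloring of its vertices by colors of type 'c
 (the color set {1..m} is modelled by an arbitrary finite type 'c, m = CARD('c)).
 Children are ordered by the list.\<close>
datatype 'c ctree = CNode 'c "'c ctree list"

type_synonym 'c cmatrix = "'c \<Rightarrow> 'c \<Rightarrow> bool"  \<comment> \<open>A p q \<longleftrightarrow> a_pq = 1\<close>

fun croot :: "'c ctree \<Rightarrow> 'c" where
  "croot (CNode c ts) = c"

fun csize :: "'c ctree \<Rightarrow> nat" where
  "csize (CNode c ts) = 1 + sum_list (map csize ts)"

fun is_A_colored :: "'c cmatrix \<Rightarrow> 'c ctree \<Rightarrow> bool" where
  "is_A_colored A (CNode c ts) = (\<forall>t\<in>set ts. A c (croot t) \<and> is_A_colored A t)"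

definition tcount :: "'c::finite cmatrix \<Rightarrow> 'c \<Rightarrow> nat \<Rightarrow> nat" where
  "tcount A i n = card {T. is_A_colored A T \<and> csize T = n \<and> croot T = i}"

definition strictly_tree_coloring_equivalent :: "'c::finite cmatrix \<Rightarrow> 'c cmatrix \<Rightarrow> bool" where
  "strictly_tree_coloring_equivalent A B \<longleftrightarrow> (\<forall>n\<ge>1. \<forall>i. tcount A i n = tcount B i n)"

definition switch_step :: "'c::finite cmatrix \<Rightarrow> 'c cmatrix \<Rightarrow> bool" where
  "switch_step C C' \<longleftrightarrow> (\<exists>I J l.
      I \<inter> J = {} \<and> card I = card J \<and>
      (\<forall>n\<ge>1. (\<Sum>i\<in>I. tcount C i n) = (\<Sum>j\<in>J. tcount C j n)) \<and>
      (\<forall>i\<in>I. \<not> C l i) \<and> (\<forall>j\<in>J. C l j) \<and>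
      C' = (\<lambda>p q. if p = l \<and> q \<in> I then True
                   else if p = l \<and> q \<in> J then False
                   else C p q))"

end

theory Submission
  imports Defs
begin

lemma csize_pos: "csize t \<ge> 1"
  by (cases t) auto

lemma csize_nz [simp]: "csize t \<noteq> 0"
  by (cases t) auto

lemma length_le_sum: "length ts \<le> sum_list (map csize ts)"
proof (induction ts)
  case (Cons t ts) then show ?case using csize_pos[of t] by simp
qed simp

lemma member_le_sum: "t \<in> set ts \<Longrightarrow> csize t \<le> sum_list (map csize ts)"
  by (induction ts) auto

lemma finite_trees: "finite {t::'c::finite ctree. csize t \<le> n}"
proof (induction n)
  case 0
  have "{t::'c ctree. csize t \<le> 0} = {}" by auto
  then show ?case by simp
next
  case (Suc n)
  let ?S = "{ts. set ts \<subseteq> {t::'c ctree. csize t \<le> n} \<and> length ts \<le> n}"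
  have fS: "finite ?S" using finite_lists_length_le[OF Suc.IH] by simp
  have "{t::'c ctree. csize t \<le> Suc n} \<subseteq> (\<lambda>(c,ts). CNode c ts) ` (UNIV \<times> ?S)"
  proof
    fix t :: "'c ctree" assume "t \<in> {t. csize t \<le> Suc n}"
    then obtain c ts where t: "t = CNode c ts" and le: "sum_list (map csize ts) \<le> n"
      by (cases t) auto
    have "ts \<in> ?S" using le length_le_sum[of ts] member_le_sum[of _ ts] by force
    then show "t \<in> (\<lambda>(c,ts). CNode c ts) ` (UNIV \<times> ?S)" using t by force
  qed
  then show ?case using fS by (meson finite_SigmaI finite_imageI finite_subset finite)
qed

definition lset :: "'c cmatrix \<Rightarrow> 'c set \<Rightarrow> nat \<Rightarrow> 'c ctree list set" where
  "lset C P m = {ts. (\<forall>t\<in>set ts. is_A_colored C t \<and> croot t \<in> P) \<and> sum_list (map csize ts) = m}"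

definition trP :: "'c cmatrix \<Rightarrow> 'c set \<Rightarrow> nat \<Rightarrow> 'c ctree set" where
  "trP C P k = {t. is_A_colored C t \<and> croot t \<in> P \<and> csize t = k}"

lemma finite_lset: "finite (lset (C::'c::finite cmatrix) P m)"
proof -
  have "lset C P m \<subseteq> {ts. set ts \<subseteq> {t::'c ctree. csize t \<le> m} \<and> length ts \<le> m}"
    unfolding lset_def using length_le_sum member_le_sum by fastforce
  then show ?thesis using finite_lists_length_le[OF finite_trees] finite_subset by blast
qed

lemma finite_trP: "finite (trP (C::'c::finite cmatrix) P k)"
  unfolding trP_def by (rule finite_subset[OF _ finite_trees[of k]]) auto

lemma lset_0: "lset C P 0 = {[]}"
proof -
  have "ts = []" if "sum_list (map csize ts) = 0" for ts :: "'c ctree list"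
    using that by (cases ts) auto
  then show ?thesis unfolding lset_def by auto
qed

lemma lset_pos: assumes "m > 0"
  shows "lset C P m = (\<Union>k\<in>{1..m}. (\<lambda>(t,ts). t#ts) ` (trP C P k \<times> lset C P (m-k)))"
proof
  show "lset C P m \<subseteq> (\<Union>k\<in>{1..m}. (\<lambda>(t,ts). t#ts) ` (trP C P k \<times> lset C P (m-k)))"
  proof
    fix xs assume xs: "xs \<in> lset C P m"
    then obtain t ts where e: "xs = t # ts" using assms by (cases xs) (auto simp: lset_def)
    have "csize t \<in> {1..m}" using xs e csize_pos[of t] by (auto simp: lset_def)
    moreover have "(t,ts) \<in> trP C P (csize t) \<times> lset C P (m - csize t)"
      using xs e by (auto simp: lset_def trP_def)
    ultimately show "xs \<in> (\<Union>k\<in>{1..m}. (\<lambda>(t,ts). t#ts) ` (trP C P k \<times> lset C P (m-k)))"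
      using e by force
  qed
next
  show "(\<Union>k\<in>{1..m}. (\<lambda>(t,ts). t#ts) ` (trP C P k \<times> lset C P (m-k))) \<subseteq> lset C P m"
    by (auto simp: lset_def trP_def)
qed

lemma card_lset_pos: assumes "m > 0"
  shows "card (lset (C::'c::finite cmatrix) P m) = (\<Sum>k\<in>{1..m}. card (trP C P k) * card (lset C P (m-k)))"
proof -
  have inj: "inj_on (\<lambda>(t,ts). t#ts) X" for X :: "('c ctree \<times> 'c ctree list) set"
    by (auto simp: inj_on_def)
  have "card (lset C P m) = (\<Sum>k\<in>{1..m}. card ((\<lambda>(t,ts). t#ts) ` (trP C P k \<times> lset C P (m-k))))"
    unfolding lset_pos[OF assms]
  proof (rule card_UN_disjoint)
    show "finite {1..m}" by simp
    show "\<forall>i\<in>{1..m}. finite ((\<lambda>(t,ts). t#ts) ` (trP C P i \<times> lset C P (m-i)))"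
      using finite_trP finite_lset by blast
    show "\<forall>i\<in>{1..m}. \<forall>j\<in>{1..m}. i \<noteq> j \<longrightarrow>
      (\<lambda>(t,ts). t#ts) ` (trP C P i \<times> lset C P (m-i)) \<inter> (\<lambda>(t,ts). t#ts) ` (trP C P j \<times> lset C P (m-j)) = {}"
      by (auto simp: trP_def)
  qed
  also have "\<dots> = (\<Sum>k\<in>{1..m}. card (trP C P k) * card (lset C P (m-k)))"
    by (simp add: card_image[OF inj] card_cartesian_product)
  finally show ?thesis .
qed

lemma card_trP: "card (trP (C::'c::finite cmatrix) P k) = (\<Sum>q\<in>P. tcount C q k)"
proof -
  have "trP C P k = (\<Union>q\<in>P. {T. is_A_colored C T \<and> csize T = k \<and> croot T = q})"
    by (auto simp: trP_def)
  also have "card \<dots> = (\<Sum>q\<in>P. card {T. is_A_colored C T \<and> csize T = k \<and> croot T = q})"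
    by (rule card_UN_disjoint) (auto intro: finite_subset[OF _ finite_trees[of k]])
  finally show ?thesis by (simp add: tcount_def)
qed

lemma tcount_0: "tcount C i 0 = 0"
  unfolding tcount_def by simp

lemma tcount_Suc: "tcount C i (Suc m) = card (lset C {q. C i q} m)"
proof -
  have "{T. is_A_colored C T \<and> csize T = Suc m \<and> croot T = i} = CNode i ` lset C {q. C i q} m"
  proof
    show "{T. is_A_colored C T \<and> csize T = Suc m \<and> croot T = i} \<subseteq> CNode i ` lset C {q. C i q} m"
    proof
      fix T assume "T \<in> {T. is_A_colored C T \<and> csize T = Suc m \<and> croot T = i}"
      then show "T \<in> CNode i ` lset C {q. C i q} m"
        by (cases T) (auto simp: lset_def)
    qed
  qed (auto simp: lset_def)
  then show ?thesis unfolding tcount_def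
    by (simp add: card_image inj_on_def)
qed

lemma tcount_1: "tcount C i (Suc 0) = 1"
  by (simp add: tcount_Suc lset_0)

lemma grec: "card (lset (C::'c::finite cmatrix) P m) =
   (if m = 0 then 1 else (\<Sum>k\<in>{1..m}. (\<Sum>q\<in>P. tcount C q k) * card (lset C P (m-k))))"
  using card_lset_pos[of m C P] by (simp add: lset_0 card_trP)


lemma conv_g_eq:
  fixes ga gb ha hb :: "nat \<Rightarrow> nat"
  assumes r1: "\<And>m. ga m = (if m = 0 then 1 else (\<Sum>k\<in>{1..m}. ha k * ga (m-k)))"
    and r2: "\<And>m. gb m = (if m = 0 then 1 else (\<Sum>k\<in>{1..m}. hb k * gb (m-k)))"
    and h: "\<And>k. 1 \<le> k \<Longrightarrow> k \<le> M \<Longrightarrow> ha k = hb k"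
  shows "m \<le> M \<Longrightarrow> ga m = gb m"
proof (induction m rule: less_induct)
  case (less m)
  show ?case
  proof (cases "m = 0")
    case True then show ?thesis using r1 r2 by simp
  next
    case False
    have "(\<Sum>k\<in>{1..m}. ha k * ga (m-k)) = (\<Sum>k\<in>{1..m}. hb k * gb (m-k))"
    proof (rule sum.cong)
      fix k assume k: "k \<in> {1..m}"
      then show "ha k * ga (m-k) = hb k * gb (m-k)"
        using h[of k] less.IH[of "m-k"] less.prems by auto
    qed simp
    then show ?thesis using r1[of m] r2[of m] False by simp
  qed
qed

lemma conv_h_eq:
  fixes ga gb ha hb :: "nat \<Rightarrow> nat"
  assumes r1: "\<And>m. ga m = (if m = 0 then 1 else (\<Sum>k\<in>{1..m}. ha k * ga (m-k)))"
    and r2: "\<And>m. gb m = (if m = 0 then 1 else (\<Sum>k\<in>{1..m}. hb k * gb (m-k)))"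
    and g: "\<And>m. ga m = gb m"
  shows "1 \<le> k \<Longrightarrow> ha k = hb k"
proof (induction k rule: less_induct)
  case (less k)
  have split: "{1..k} = insert k {1..<k}" using less.prems by auto
  have S: "(\<Sum>j\<in>{1..<k}. ha j * ga (k-j)) = (\<Sum>j\<in>{1..<k}. hb j * gb (k-j))"
    by (rule sum.cong) (use less.IH g in auto)
  have e1: "(\<Sum>j\<in>{1..k}. ha j * ga (k-j)) = ha k * ga 0 + (\<Sum>j\<in>{1..<k}. ha j * ga (k-j))"
    unfolding split by simp
  have e2: "(\<Sum>j\<in>{1..k}. hb j * gb (k-j)) = hb k * gb 0 + (\<Sum>j\<in>{1..<k}. hb j * gb (k-j))"
    unfolding split by simp
  have "ga k = ha k * ga 0 + (\<Sum>j\<in>{1..<k}. ha j * ga (k-j))"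
    using r1[of k] less.prems e1 by simp
  moreover have "gb k = hb k * gb 0 + (\<Sum>j\<in>{1..<k}. hb j * gb (k-j))"
    using r2[of k] less.prems e2 by simp
  moreover have "ga 0 = 1" "gb 0 = 1" using r1[of 0] r2[of 0] by simp_all
  ultimately show ?case using g[of k] S by simp
qed

lemma preserve:
  fixes C C' :: "'c::finite cmatrix"
  assumes rows: "\<And>p q. p \<noteq> l \<Longrightarrow> C p q = C' p q"
    and hl: "\<And>k. (\<Sum>q\<in>{q. C l q}. tcount C q k) = (\<Sum>q\<in>{q. C' l q}. tcount C q k)"
  shows "tcount C i n = tcount C' i n"
proof (induction n arbitrary: i rule: less_induct)
  case (less n)
  show ?case
  proof (cases n)
    case 0 then show ?thesis by (simp add: tcount_0)
  next
    case (Suc m)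
    have "card (lset C {q. C i q} m) = card (lset C' {q. C' i q} m)"
    proof (rule conv_g_eq[where M = m and ga = "\<lambda>m. card (lset C {q. C i q} m)"
        and gb = "\<lambda>m. card (lset C' {q. C' i q} m)" and ha = "\<lambda>k. \<Sum>q\<in>{q. C i q}. tcount C q k"
        and hb = "\<lambda>k. \<Sum>q\<in>{q. C' i q}. tcount C' q k"])
      show "\<And>m'. card (lset C {q. C i q} m') = (if m' = 0 then 1 else
          (\<Sum>k\<in>{1..m'}. (\<Sum>q\<in>{q. C i q}. tcount C q k) * card (lset C {q. C i q} (m'-k))))"
        by (rule grec)
      show "\<And>m'. card (lset C' {q. C' i q} m') = (if m' = 0 then 1 else
          (\<Sum>k\<in>{1..m'}. (\<Sum>q\<in>{q. C' i q}. tcount C' q k) * card (lset C' {q. C' i q} (m'-k))))"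
        by (rule grec)
      fix k assume k: "1 \<le> k" "k \<le> m"
      have IH: "tcount C q k = tcount C' q k" for q using less.IH[of k q] k Suc by simp
      show "(\<Sum>q\<in>{q. C i q}. tcount C q k) = (\<Sum>q\<in>{q. C' i q}. tcount C' q k)"
      proof (cases "i = l")
        case True
        then show ?thesis using hl[of k] IH by simp
      next
        case False
        then have "{q. C i q} = {q. C' i q}" using rows by auto
        then show ?thesis using IH by simp
      qed
    qed simp
    then show ?thesis using Suc by (simp add: tcount_Suc)
  qed
qed

lemma row_eq:
  fixes A B :: "'c::finite cmatrix"
  assumes eq: "\<And>i n. tcount A i n = tcount B i n"
  shows "(\<Sum>q\<in>{q. A l q}. tcount A q k) = (\<Sum>q\<in>{q. B l q}. tcount A q k)"
proof (cases "k = 0")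
  case True then show ?thesis by (simp add: tcount_0)
next
  case False
  have "(\<Sum>q\<in>{q. A l q}. tcount A q k) = (\<Sum>q\<in>{q. B l q}. tcount B q k)"
  proof (rule conv_h_eq[where ga = "\<lambda>m. card (lset A {q. A l q} m)"
        and gb = "\<lambda>m. card (lset B {q. B l q} m)" and ha = "\<lambda>k. \<Sum>q\<in>{q. A l q}. tcount A q k"
        and hb = "\<lambda>k. \<Sum>q\<in>{q. B l q}. tcount B q k"])
    show "\<And>m. card (lset A {q. A l q} m) = (if m = 0 then 1 else
          (\<Sum>k\<in>{1..m}. (\<Sum>q\<in>{q. A l q}. tcount A q k) * card (lset A {q. A l q} (m-k))))"
      by (rule grec)
    show "\<And>m. card (lset B {q. B l q} m) = (if m = 0 then 1 else
          (\<Sum>k\<in>{1..m}. (\<Sum>q\<in>{q. B l q}. tcount B q k) * card (lset B {q. B l q} (m-k))))"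
      by (rule grec)
    show "\<And>m. card (lset A {q. A l q} m) = card (lset B {q. B l q} m)"
      using eq by (simp flip: tcount_Suc)
  qed (use False in simp)
  then show ?thesis using eq by simp
qed

theorem theorem19:
  fixes A B :: "'c::finite cmatrix"
  assumes "A \<noteq> B"
    and "strictly_tree_coloring_equivalent A B"
  shows "\<exists>r::nat. \<exists>C :: nat \<Rightarrow> 'c cmatrix. r \<ge> 1 \<and> C 0 = A \<and> C r = B \<and>
           (\<forall>s\<in>{1..r}. switch_step (C (s - 1)) (C s))"
proof -
  have eq: "tcount A i n = tcount B i n" for i n
    using assms(2) by (cases n) (auto simp: strictly_tree_coloring_equivalent_def tcount_0)
  obtain xs :: "'c list" where dxs: "distinct xs" and sxs: "set xs = UNIV"
    using finite_distinct_list[OF finite_UNIV] by blast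
  define r where "r = length xs"
  define D where "D s = (\<lambda>p q. if p \<in> set (take s xs) then B p q else A p q)" for s
  have r1: "r \<ge> 1" unfolding r_def using sxs by (cases xs) auto
  have D0: "D 0 = A" unfolding D_def by simp
  have Dr: "D r = B" unfolding D_def r_def using sxs by simp
  have stepinfo: "D (s-1) l = A l \<and> D s l = B l \<and> (\<forall>p. p \<noteq> l \<longrightarrow> D (s-1) p = D s p)"
    if s: "s \<in> {1..r}" and l: "l = xs ! (s-1)" for s l
  proof -
    have ts: "take s xs = take (s-1) xs @ [l]"
      using s l take_Suc_conv_app_nth[of "s-1" xs] by (auto simp: r_def)
    have "distinct (take s xs)" using dxs by simp
    then have "l \<notin> set (take (s-1) xs)" using ts by simp
    then show ?thesis unfolding D_def using ts by (auto simp: fun_eq_iff)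
  qed
  have tc: "\<forall>i n. tcount (D s) i n = tcount A i n" if "s \<le> r" for s
    using that
  proof (induction s)
    case 0 then show ?case by (simp add: D0)
  next
    case (Suc s)
    define l where "l = xs ! s"
    have si: "D s l = A l \<and> D (Suc s) l = B l \<and> (\<forall>p. p \<noteq> l \<longrightarrow> D s p = D (Suc s) p)"
      using stepinfo[where s="Suc s" and l=l] Suc.prems l_def by simp
    have IH: "tcount (D s) i n = tcount A i n" for i n using Suc by simp
    have "tcount (D s) i n = tcount (D (Suc s)) i n" for i n
    proof (rule preserve[where l = l])
      show "\<And>p q. p \<noteq> l \<Longrightarrow> D s p q = D (Suc s) p q" using si by simp
      show "\<And>k. (\<Sum>q\<in>{q. D s l q}. tcount (D s) q k) = (\<Sum>q\<in>{q. D (Suc s) l q}. tcount (D s) q k)"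
        using si row_eq[OF eq, where l=l] by (simp add: IH)
    qed
    then show ?case using IH by simp
  qed
  have "switch_step (D (s - 1)) (D s)" if s: "s \<in> {1..r}" for s
  proof -
    define l where "l = xs ! (s-1)"
    have si: "D (s-1) l = A l \<and> D s l = B l \<and> (\<forall>p. p \<noteq> l \<longrightarrow> D (s-1) p = D s p)"
      using stepinfo[OF s] l_def by simp
    have T: "tcount (D (s-1)) i n = tcount A i n" for i n using tc[of "s-1"] s by auto
    define I where "I = {q. \<not> A l q \<and> B l q}"
    define J where "J = {q. A l q \<and> \<not> B l q}"
    define K where "K = {q. A l q \<and> B l q}"
    have sumIJ: "(\<Sum>i\<in>I. tcount A i n) = (\<Sum>j\<in>J. tcount A j n)" for n
    proof -
      have a: "{q. A l q} = J \<union> K" "{q. B l q} = I \<union> K" unfolding I_def J_def K_def by auto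
      have d: "J \<inter> K = {}" "I \<inter> K = {}" unfolding I_def J_def K_def by auto
      have "(\<Sum>j\<in>J. tcount A j n) + (\<Sum>q\<in>K. tcount A q n) = (\<Sum>i\<in>I. tcount A i n) + (\<Sum>q\<in>K. tcount A q n)"
        using row_eq[OF eq, where l=l and k=n] unfolding a by (simp add: sum.union_disjoint d)
      then show ?thesis by simp
    qed
    have cIJ: "card I = card J"
      using sumIJ[of 1] by (simp add: tcount_1)
    show ?thesis unfolding switch_step_def
    proof (intro exI conjI)
      show "I \<inter> J = {}" unfolding I_def J_def by auto
      show "card I = card J" by (rule cIJ)
      show "\<forall>n\<ge>1. (\<Sum>i\<in>I. tcount (D (s-1)) i n) = (\<Sum>j\<in>J. tcount (D (s-1)) j n)"
        using sumIJ T by auto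
      show "\<forall>i\<in>I. \<not> D (s-1) l i" using si unfolding I_def by simp
      show "\<forall>j\<in>J. D (s-1) l j" using si unfolding J_def by simp
      show "D s = (\<lambda>p q. if p = l \<and> q \<in> I then True else if p = l \<and> q \<in> J then False
                   else D (s-1) p q)"
        using si unfolding I_def J_def by (auto simp: fun_eq_iff)
    qed
  qed
  then show ?thesis using r1 D0 Dr by blast
qed

end
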